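(* Let $G=(V,E)$ be a connected undirected graph with $n=|V|$ vertices and minimum degree $D$, let $\delta>0$, and let $T(n)$ be the $\delta$-mixing time of $G$. Consider a standard random walk on $G$. For any vertex $v$, any time index $j$, any integer $z \ge T(n)$ and any edge $e\in E$, the conditional probability, given that the walk is at vertex $v$ at time index $j$, that the walk traverses edge $e$ between time indices $j+z$ and $j+z+1$ lies between $\frac{1}{|E|} - \frac{2\delta}{D}$ and $\frac{1}{|E|}+\frac{2\delta}{D}$.
   Context: A standard random walk moves at each step to a uniformly random neighbor of the current vertex; its stationary distribution is $\mu(u)=d_u/(2|E|)$ with $d_u$ the degree of $u$. The $\delta$-mixing time is the smallest $t'$ such that, for every starting vertex, the distribution $\mu'$ of the walk's position after $t'$ steps satisfies $\|\mu-\mu'\|_\infty\le\delta$. The walk traverses edge $\{v_{i-1},v_i\}$ between time indices $i-1$ and $i$, where $v_i$ is its position at time $i$. *)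

theory Defs
  imports Complex_Main
begin

definition simple_graph :: "'a set \<Rightarrow> ('a \<Rightarrow> 'a \<Rightarrow> bool) \<Rightarrow> bool" where
  "simple_graph V E \<longleftrightarrow> finite V \<and> (\<forall>u w. E u w \<longrightarrow> u \<in> V \<and> w \<in> V)
     \<and> (\<forall>u w. E u w \<longrightarrow> E w u) \<and> (\<forall>u. \<not> E u u)"

definition connected_graph :: "'a set \<Rightarrow> ('a \<Rightarrow> 'a \<Rightarrow> bool) \<Rightarrow> bool" where
  "connected_graph V E \<longleftrightarrow> V \<noteq> {} \<and> (\<forall>u\<in>V. \<forall>w\<in>V. E\<^sup>*\<^sup>* u w)"

definition edges :: "'a set \<Rightarrow> ('a \<Rightarrow> 'a \<Rightarrow> bool) \<Rightarrow> 'a set set" where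
  "edges V E = {{u, w} | u w. u \<in> V \<and> w \<in> V \<and> E u w}"

definition degree :: "'a set \<Rightarrow> ('a \<Rightarrow> 'a \<Rightarrow> bool) \<Rightarrow> 'a \<Rightarrow> nat" where
  "degree V E u = card {w \<in> V. E u w}"

definition min_degree :: "'a set \<Rightarrow> ('a \<Rightarrow> 'a \<Rightarrow> bool) \<Rightarrow> nat" where
  "min_degree V E = Min (degree V E ` V)"

definition trans_prob :: "'a set \<Rightarrow> ('a \<Rightarrow> 'a \<Rightarrow> bool) \<Rightarrow> 'a \<Rightarrow> 'a \<Rightarrow> real" where
  "trans_prob V E u w = (if E u w then 1 / real (degree V E u) else 0)"

definition stationary :: "'a set \<Rightarrow> ('a \<Rightarrow> 'a \<Rightarrow> bool) \<Rightarrow> 'a \<Rightarrow> real" where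
  "stationary V E u = real (degree V E u) / (2 * real (card (edges V E)))"

fun step_dist :: "'a set \<Rightarrow> ('a \<Rightarrow> 'a \<Rightarrow> bool) \<Rightarrow> nat \<Rightarrow> 'a \<Rightarrow> 'a \<Rightarrow> real" where
  "step_dist V E 0 u x = (if x = u then 1 else 0)"
| "step_dist V E (Suc t) u x = (\<Sum>w\<in>V. step_dist V E t u w * trans_prob V E w x)"

definition is_mixed :: "'a set \<Rightarrow> ('a \<Rightarrow> 'a \<Rightarrow> bool) \<Rightarrow> real \<Rightarrow> nat \<Rightarrow> bool" where
  "is_mixed V E \<delta> t \<longleftrightarrow>
     (\<forall>u\<in>V. \<forall>x\<in>V. \<bar>stationary V E x - step_dist V E t u x\<bar> \<le> \<delta>)"

definition mixing_time :: "'a set \<Rightarrow> ('a \<Rightarrow> 'a \<Rightarrow> bool) \<Rightarrow> real \<Rightarrow> nat" where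
  "mixing_time V E \<delta> = (LEAST t. is_mixed V E \<delta> t)"

definition paths :: "'a set \<Rightarrow> nat \<Rightarrow> 'a list set" where
  "paths V k = {xs. set xs \<subseteq> V \<and> length xs = Suc k}"

definition path_prob :: "'a set \<Rightarrow> ('a \<Rightarrow> 'a \<Rightarrow> bool) \<Rightarrow> ('a \<Rightarrow> real) \<Rightarrow> 'a list \<Rightarrow> real" where
  "path_prob V E \<mu>0 xs =
     \<mu>0 (hd xs) * (\<Prod>i<length xs - 1. trans_prob V E (xs ! i) (xs ! Suc i))"

definition walk_Pr ::
  "'a set \<Rightarrow> ('a \<Rightarrow> 'a \<Rightarrow> bool) \<Rightarrow> ('a \<Rightarrow> real) \<Rightarrow> nat \<Rightarrow> ('a list \<Rightarrow> bool) \<Rightarrow> real" where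
  "walk_Pr V E \<mu>0 k A = (\<Sum>xs\<in>{xs \<in> paths V k. A xs}. path_prob V E \<mu>0 xs)"

definition init_dist :: "'a set \<Rightarrow> ('a \<Rightarrow> real) \<Rightarrow> bool" where
  "init_dist V \<mu>0 \<longleftrightarrow> (\<forall>u\<in>V. 0 \<le> \<mu>0 u) \<and> (\<Sum>u\<in>V. \<mu>0 u) = 1"

end

theory Submission
  imports Defs
begin

fun gS :: "'a set \<Rightarrow> ('a\<Rightarrow>'a\<Rightarrow>bool) \<Rightarrow> ('a\<Rightarrow>real) \<Rightarrow> (nat \<Rightarrow> 'a set) \<Rightarrow> nat \<Rightarrow> 'a \<Rightarrow> real" where
  "gS V E \<mu> S 0 x = (if x \<in> S 0 then \<mu> x else 0)"
| "gS V E \<mu> S (Suc k) x = (if x \<in> S (Suc k) then (\<Sum>w\<in>V. gS V E \<mu> S k w * trans_prob V E w x) else 0)"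

lemma finite_paths: "finite V \<Longrightarrow> finite (paths V k)"
  unfolding paths_def by (rule finite_lists_length_eq)

lemma path_prob_snoc:
  assumes "length ys = Suc k"
  shows "path_prob V E \<mu> (ys @ [x]) = path_prob V E \<mu> ys * trans_prob V E (last ys) x"
proof -
  have hd: "hd (ys @ [x]) = hd ys" using assms by (cases ys) auto
  have lst: "last ys = ys ! k" using assms by (cases ys rule: rev_cases) (auto simp: nth_append)
  have c: "(\<Prod>i<k. trans_prob V E ((ys@[x]) ! i) ((ys@[x]) ! Suc i)) = (\<Prod>i<k. trans_prob V E (ys ! i) (ys ! Suc i))"
    using assms by (intro prod.cong) (auto simp: nth_append)
  have "(\<Prod>i<length (ys@[x]) - 1. trans_prob V E ((ys@[x]) ! i) ((ys@[x]) ! Suc i))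
      = (\<Prod>i<Suc k. trans_prob V E ((ys@[x]) ! i) ((ys@[x]) ! Suc i))" using assms by simp
  also have "\<dots> = (\<Prod>i<k. trans_prob V E ((ys@[x]) ! i) ((ys@[x]) ! Suc i)) * trans_prob V E (ys ! k) x"
    using assms by (simp add: nth_append)
  also have "\<dots> = (\<Prod>i<length ys - 1. trans_prob V E (ys ! i) (ys ! Suc i)) * trans_prob V E (last ys) x"
    using c lst assms by simp
  finally have P: "(\<Prod>i<length (ys@[x]) - 1. trans_prob V E ((ys@[x]) ! i) ((ys@[x]) ! Suc i))
      = (\<Prod>i<length ys - 1. trans_prob V E (ys ! i) (ys ! Suc i)) * trans_prob V E (last ys) x" .
  show ?thesis unfolding path_prob_def P hd by (simp only: mult.assoc)
qed

lemma path_sum: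
  assumes "finite V" "x \<in> V"
  shows "(\<Sum>xs\<in>{xs\<in>paths V k. (\<forall>i\<le>k. xs!i \<in> S i) \<and> last xs = x}. path_prob V E \<mu> xs) = gS V E \<mu> S k x"
  using assms(2)
proof (induction k arbitrary: x)
  case 0
  have "{xs\<in>paths V 0. (\<forall>i\<le>0. xs!i \<in> S i) \<and> last xs = x} = (if x \<in> S 0 then {[x]} else {})"
    using 0 by (auto simp: paths_def length_Suc_conv)
  then show ?case by (simp add: path_prob_def)
next
  case (Suc k)
  let ?A = "{ys\<in>paths V k. \<forall>i\<le>k. ys!i \<in> S i}"
  have seteq: "{xs\<in>paths V (Suc k). (\<forall>i\<le>Suc k. xs!i \<in> S i) \<and> last xs = x}
     = (if x \<in> S (Suc k) then (\<lambda>ys. ys@[x]) ` ?A else {})"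
  proof (cases "x \<in> S (Suc k)")
    case True
    have 1: "xs \<in> (\<lambda>ys. ys@[x]) ` ?A" if xs: "xs\<in>paths V (Suc k)" "\<forall>i\<le>Suc k. xs!i \<in> S i" "last xs = x" for xs
    proof -
      have ne: "xs \<noteq> []" using xs(1) by (auto simp: paths_def)
      have eq: "xs = butlast xs @ [x]" using ne xs(3) by (metis append_butlast_last_id)
      have "butlast xs \<in> ?A"
      proof -
        have "length (butlast xs) = Suc k" using xs(1) by (auto simp: paths_def)
        moreover have "set (butlast xs) \<subseteq> V" using xs(1) in_set_butlastD by (fastforce simp: paths_def)
        moreover have "\<forall>i\<le>k. butlast xs ! i \<in> S i" using xs(2) xs(1)
          by (auto simp: paths_def nth_butlast)
        ultimately show ?thesis by (auto simp: paths_def)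
      qed
      with eq show ?thesis by blast
    qed
    have 2: "ys@[x] \<in> {xs\<in>paths V (Suc k). (\<forall>i\<le>Suc k. xs!i \<in> S i) \<and> last xs = x}" if "ys \<in> ?A" for ys
    proof -
      have l: "length ys = Suc k" "set ys \<subseteq> V" using that by (auto simp: paths_def)
      have "\<forall>i\<le>Suc k. (ys@[x])!i \<in> S i"
      proof (intro allI impI)
        fix i assume "i \<le> Suc k"
        then show "(ys@[x])!i \<in> S i" using that l True
          by (cases "i = Suc k") (auto simp: nth_append)
      qed
      then show ?thesis using l Suc.prems by (auto simp: paths_def)
    qed
    have "{xs\<in>paths V (Suc k). (\<forall>i\<le>Suc k. xs!i \<in> S i) \<and> last xs = x} = (\<lambda>ys. ys@[x]) ` ?A"
    proof (rule equalityI)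
      show "{xs\<in>paths V (Suc k). (\<forall>i\<le>Suc k. xs!i \<in> S i) \<and> last xs = x} \<subseteq> (\<lambda>ys. ys@[x]) ` ?A"
        using 1 by blast
      show "(\<lambda>ys. ys@[x]) ` ?A \<subseteq> {xs\<in>paths V (Suc k). (\<forall>i\<le>Suc k. xs!i \<in> S i) \<and> last xs = x}"
        using 2 by blast
    qed
    then show ?thesis using True by simp
  next
    case False
    have "\<not> ((\<forall>i\<le>Suc k. xs!i \<in> S i) \<and> last xs = x)" if "xs \<in> paths V (Suc k)" for xs
    proof
      assume h: "(\<forall>i\<le>Suc k. xs!i \<in> S i) \<and> last xs = x"
      have "length xs = Suc (Suc k)" using that by (simp add: paths_def)
      then have "last xs = xs ! Suc k" by (metis diff_Suc_1 last_conv_nth list.size(3) nat.distinct(1))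
      then show False using h False by auto
    qed
    then have "{xs\<in>paths V (Suc k). (\<forall>i\<le>Suc k. xs!i \<in> S i) \<and> last xs = x} = {}" by blast
    then show ?thesis using False by simp
  qed
  show ?case
  proof (cases "x \<in> S (Suc k)")
    case False then show ?thesis unfolding seteq by simp
  next
    case True
    have fA: "finite ?A" using finite_paths[OF assms(1)] by simp
    have "(\<Sum>xs\<in>{xs\<in>paths V (Suc k). (\<forall>i\<le>Suc k. xs!i \<in> S i) \<and> last xs = x}. path_prob V E \<mu> xs)
        = (\<Sum>ys\<in>?A. path_prob V E \<mu> (ys@[x]))"
      using True seteq by (simp add: sum.reindex inj_on_def)
    also have "\<dots> = (\<Sum>ys\<in>?A. path_prob V E \<mu> ys * trans_prob V E (last ys) x)"
      by (intro sum.cong) (auto simp: paths_def path_prob_snoc)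
    also have "\<dots> = (\<Sum>w\<in>V. \<Sum>ys\<in>{ys. ys\<in>?A \<and> last ys = w}. path_prob V E \<mu> ys * trans_prob V E (last ys) x)"
    proof (rule sum.group[symmetric, OF fA assms(1)])
      show "last ` ?A \<subseteq> V"
      proof
        fix w assume "w \<in> last ` ?A"
        then obtain ys where "ys \<in> ?A" "w = last ys" by blast
        then show "w \<in> V" by (auto simp: paths_def) (metis last_in_set list.size(3) nat.distinct(1) subsetD)
      qed
    qed
    also have "\<dots> = (\<Sum>w\<in>V. gS V E \<mu> S k w * trans_prob V E w x)"
    proof (intro sum.cong refl)
      fix w assume w: "w \<in> V"
      have "(\<Sum>ys\<in>{ys. ys\<in>?A \<and> last ys = w}. path_prob V E \<mu> ys * trans_prob V E (last ys) x)
          = (\<Sum>ys\<in>{ys\<in>paths V k. (\<forall>i\<le>k. ys!i \<in> S i) \<and> last ys = w}. path_prob V E \<mu> ys) * trans_prob V E w x"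
        by (simp add: sum_distrib_right conj_assoc)
      then show "(\<Sum>ys\<in>{ys. ys\<in>?A \<and> last ys = w}. path_prob V E \<mu> ys * trans_prob V E (last ys) x)
          = gS V E \<mu> S k w * trans_prob V E w x" using Suc.IH[OF w] by simp
    qed
    finally show ?thesis using True by simp
  qed
qed

lemma walk_Pr_gS:
  assumes "finite V"
  shows "walk_Pr V E \<mu> k (\<lambda>xs. \<forall>i\<le>k. xs!i \<in> S i) = (\<Sum>x\<in>V. gS V E \<mu> S k x)"
proof -
  let ?A = "{xs\<in>paths V k. \<forall>i\<le>k. xs!i \<in> S i}"
  have "walk_Pr V E \<mu> k (\<lambda>xs. \<forall>i\<le>k. xs!i \<in> S i) = (\<Sum>x\<in>V. \<Sum>xs\<in>{xs. xs\<in>?A \<and> last xs = x}. path_prob V E \<mu> xs)"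
    unfolding walk_Pr_def
  proof (rule sum.group[symmetric])
    show "finite ?A" using finite_paths[OF assms] by simp
    show "last ` ?A \<subseteq> V"
    proof
      fix w assume "w \<in> last ` ?A"
      then obtain ys where "ys \<in> ?A" "w = last ys" by blast
      then show "w \<in> V" by (auto simp: paths_def) (metis last_in_set list.size(3) nat.distinct(1) subsetD)
    qed
  qed (fact assms)
  also have "\<dots> = (\<Sum>x\<in>V. gS V E \<mu> S k x)"
    by (intro sum.cong refl) (simp add: path_sum[OF assms, symmetric] conj_assoc)
  finally show ?thesis .
qed


lemma gS_zero: "x \<notin> S k \<Longrightarrow> gS V E \<mu> S k x = 0"
  by (cases k) auto

lemma gS_agree: "(\<forall>i\<le>k. S i = S' i) \<Longrightarrow> gS V E \<mu> S k x = gS V E \<mu> S' k x"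
proof (induction k arbitrary: x)
  case 0 then show ?case by simp
next
  case (Suc k)
  then have "\<And>w. gS V E \<mu> S k w = gS V E \<mu> S' k w" by simp
  then show ?case using Suc.prems by simp
qed

lemma gS_restrict:
  assumes "\<forall>i<k. S i = S' i" "S k = S' k \<inter> A"
  shows "gS V E \<mu> S k x = (if x \<in> A then gS V E \<mu> S' k x else 0)"
proof (cases k)
  case 0 then show ?thesis using assms by auto
next
  case (Suc k')
  then have "\<And>w. gS V E \<mu> S k' w = gS V E \<mu> S' k' w" using assms(1) by (intro gS_agree) auto
  then show ?thesis using assms(2) Suc by auto
qed

locale G =
  fixes V :: "'a set" and E :: "'a \<Rightarrow> 'a \<Rightarrow> bool" and a b :: 'a
  assumes sg: "simple_graph V E" and conn: "connected_graph V E"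
    and ab: "E a b" "a \<noteq> b"
begin

lemma finV: "finite V" using sg by (simp add: simple_graph_def)
lemma inV: "E u w \<Longrightarrow> u \<in> V \<and> w \<in> V" using sg by (simp add: simple_graph_def)
lemma sym: "E u w \<Longrightarrow> E w u" using sg by (simp add: simple_graph_def)

lemma deg_pos: assumes u: "u \<in> V" shows "degree V E u > 0"
proof -
  obtain w where w: "w \<in> V" "w \<noteq> u" using ab inV by metis
  have "E\<^sup>*\<^sup>* u w" using conn u w by (simp add: connected_graph_def)
  then obtain y where "E u y" using w(2) by (metis converse_rtranclpE)
  then have "y \<in> {w \<in> V. E u w}" using inV by auto
  then show ?thesis unfolding degree_def using finV by (metis (no_types, lifting) card_gt_0_iff empty_iff finite_subset mem_Collect_eq subsetI)
qed

lemma trans_nonneg: "trans_prob V E u w \<ge> 0" by (simp add: trans_prob_def)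

lemma sum_trans: assumes u: "u \<in> V" shows "(\<Sum>w\<in>V. trans_prob V E u w) = 1"
proof -
  have "(\<Sum>w\<in>V. trans_prob V E u w) = (\<Sum>w\<in>{w\<in>V. E u w}. 1 / real (degree V E u))"
    unfolding trans_prob_def using sum.inter_filter[OF finV, of "\<lambda>_. 1 / real (degree V E u)" "E u"] by simp
  also have "\<dots> = 1" using deg_pos[OF u] by (simp add: degree_def)
  finally show ?thesis .
qed

lemma step_left: assumes u: "u \<in> V"
  shows "step_dist V E (Suc t) u x = (\<Sum>w\<in>V. trans_prob V E u w * step_dist V E t w x)"
proof (induction t arbitrary: x)
  case 0
  have "(\<Sum>w\<in>V. trans_prob V E u w * step_dist V E 0 w x) = (\<Sum>w\<in>V. if w = x then trans_prob V E u x else 0)"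
    by (intro sum.cong) auto
  also have "\<dots> = (if x \<in> V then trans_prob V E u x else 0)"
    using finV by simp
  also have "\<dots> = trans_prob V E u x" using inV by (auto simp: trans_prob_def)
  also have "\<dots> = (\<Sum>w\<in>V. if w = u then trans_prob V E u x else 0)"
    using finV u by simp
  also have "\<dots> = step_dist V E (Suc 0) u x"
    by simp (intro sum.cong, auto)
  finally show ?case by simp
next
  case (Suc t)
  have "step_dist V E (Suc (Suc t)) u x = (\<Sum>y\<in>V. (\<Sum>w\<in>V. trans_prob V E u w * step_dist V E t w y) * trans_prob V E y x)"
    using Suc by simp
  also have "\<dots> = (\<Sum>w\<in>V. trans_prob V E u w * (\<Sum>y\<in>V. step_dist V E t w y * trans_prob V E y x))"
  proof -
    have "(\<Sum>y\<in>V. (\<Sum>w\<in>V. trans_prob V E u w * step_dist V E t w y) * trans_prob V E y x)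
        = (\<Sum>y\<in>V. \<Sum>w\<in>V. trans_prob V E u w * (step_dist V E t w y * trans_prob V E y x))"
      by (simp add: sum_distrib_right mult.assoc)
    also have "\<dots> = (\<Sum>w\<in>V. \<Sum>y\<in>V. trans_prob V E u w * (step_dist V E t w y * trans_prob V E y x))"
      by (rule sum.swap)
    also have "\<dots> = (\<Sum>w\<in>V. trans_prob V E u w * (\<Sum>y\<in>V. step_dist V E t w y * trans_prob V E y x))"
      by (simp add: sum_distrib_left)
    finally show ?thesis .
  qed
  finally show ?case by simp
qed

lemma step_sum: assumes u: "u \<in> V" shows "(\<Sum>x\<in>V. step_dist V E t u x) = 1"
proof (induction t)
  case 0 then show ?case using u finV by simp
next
  case (Suc t)
  have "(\<Sum>x\<in>V. step_dist V E (Suc t) u x) = (\<Sum>w\<in>V. step_dist V E t u w * (\<Sum>x\<in>V. trans_prob V E w x))"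
  proof -
    have "(\<Sum>x\<in>V. step_dist V E (Suc t) u x) = (\<Sum>x\<in>V. \<Sum>w\<in>V. step_dist V E t u w * trans_prob V E w x)" by simp
    also have "\<dots> = (\<Sum>w\<in>V. \<Sum>x\<in>V. step_dist V E t u w * trans_prob V E w x)" by (rule sum.swap)
    finally show ?thesis by (simp add: sum_distrib_left)
  qed
  also have "\<dots> = (\<Sum>w\<in>V. step_dist V E t u w)" using sum_trans by simp
  finally show ?case using Suc by simp
qed

lemma mixed_Suc: assumes "is_mixed V E \<delta> t" shows "is_mixed V E \<delta> (Suc t)"
  unfolding is_mixed_def
proof (intro ballI)
  fix u x assume u: "u \<in> V" and x: "x \<in> V"
  have eq: "stationary V E x - step_dist V E (Suc t) u x
      = (\<Sum>w\<in>V. trans_prob V E u w * (stationary V E x - step_dist V E t w x))"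
  proof -
    have "(\<Sum>w\<in>V. trans_prob V E u w * (stationary V E x - step_dist V E t w x))
        = (\<Sum>w\<in>V. trans_prob V E u w) * stationary V E x - (\<Sum>w\<in>V. trans_prob V E u w * step_dist V E t w x)"
      by (simp add: right_diff_distrib sum_subtractf sum_distrib_right)
    then show ?thesis using step_left[OF u, of t x] sum_trans[OF u] by (simp del: step_dist.simps)
  qed
  have "\<bar>\<Sum>w\<in>V. trans_prob V E u w * (stationary V E x - step_dist V E t w x)\<bar> \<le> (\<Sum>w\<in>V. \<bar>trans_prob V E u w * (stationary V E x - step_dist V E t w x)\<bar>)"
    by (rule sum_abs)
  also have "\<dots> \<le> (\<Sum>w\<in>V. trans_prob V E u w * \<delta>)"
  proof (rule sum_mono)
    fix w assume w: "w \<in> V"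
    have "\<bar>stationary V E x - step_dist V E t w x\<bar> \<le> \<delta>" using assms w x by (simp add: is_mixed_def)
    then show "\<bar>trans_prob V E u w * (stationary V E x - step_dist V E t w x)\<bar> \<le> trans_prob V E u w * \<delta>"
      using trans_nonneg[of u w] by (metis abs_mult abs_of_nonneg mult_left_mono)
  qed
  also have "\<dots> = (\<Sum>w\<in>V. trans_prob V E u w) * \<delta>" by (rule sum_distrib_right[symmetric])
  also have "\<dots> = \<delta>" using sum_trans[OF u] by simp
  finally show "\<bar>stationary V E x - step_dist V E (Suc t) u x\<bar> \<le> \<delta>" unfolding eq .
qed

lemma mixed_mono: "is_mixed V E \<delta> t \<Longrightarrow> t \<le> z \<Longrightarrow> is_mixed V E \<delta> z"
  by (induction z) (auto intro: mixed_Suc simp: le_Suc_eq)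

lemma min_deg: "0 < min_degree V E" "u \<in> V \<Longrightarrow> min_degree V E \<le> degree V E u"
proof -
  have ne: "V \<noteq> {}" using ab inV by auto
  have "min_degree V E \<in> degree V E ` V" unfolding min_degree_def using finV ne by (intro Min_in) auto
  then show "0 < min_degree V E" using deg_pos by auto
  show "u \<in> V \<Longrightarrow> min_degree V E \<le> degree V E u" unfolding min_degree_def using finV by (intro Min_le) auto
qed

end

theorem lemma1:
  fixes V :: "'a set" and E :: "'a \<Rightarrow> 'a \<Rightarrow> bool" and \<delta> :: real
    and \<mu>0 :: "'a \<Rightarrow> real" and v :: 'a and j z :: nat and e :: "'a set"
  assumes "simple_graph V E" and "connected_graph V E"
    and "\<delta> > 0"
    and "\<exists>t. is_mixed V E \<delta> t"
    and "init_dist V \<mu>0"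
    and "z \<ge> mixing_time V E \<delta>"
    and "e \<in> edges V E"
    and "walk_Pr V E \<mu>0 (Suc (j + z)) (\<lambda>xs. xs ! j = v) > 0"
  shows "1 / real (card (edges V E)) - 2 * \<delta> / real (min_degree V E)
           \<le> walk_Pr V E \<mu>0 (Suc (j + z)) (\<lambda>xs. xs ! j = v \<and> {xs ! (j + z), xs ! Suc (j + z)} = e)
             / walk_Pr V E \<mu>0 (Suc (j + z)) (\<lambda>xs. xs ! j = v)
       \<and> walk_Pr V E \<mu>0 (Suc (j + z)) (\<lambda>xs. xs ! j = v \<and> {xs ! (j + z), xs ! Suc (j + z)} = e)
             / walk_Pr V E \<mu>0 (Suc (j + z)) (\<lambda>xs. xs ! j = v)
           \<le> 1 / real (card (edges V E)) + 2 * \<delta> / real (min_degree V E)"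
proof -
  from assms(7) obtain a b where e: "e = {a,b}" "E a b" "a \<in> V" "b \<in> V"
    unfolding edges_def by blast
  have ab: "a \<noteq> b" using e(2) assms(1) by (auto simp: simple_graph_def)
  interpret G V E a b using assms(1,2) e(2) ab by unfold_locales
  let ?k = "Suc (j + z)"
  define S1 where "S1 = (\<lambda>i::nat. {x. i = j \<longrightarrow> x = v})"
  define c where "c = gS V E \<mu>0 S1 j v"
  have g1: "gS V E \<mu>0 S1 (j+t) x = c * step_dist V E t v x" for t x
  proof (induction t arbitrary: x)
    case 0
    show ?case
    proof (cases "x = v")
      case True then show ?thesis by (simp add: c_def)
    next
      case False then have "x \<notin> S1 j" by (simp add: S1_def)
      then show ?thesis using False gS_zero[of x S1 j] by simp
    qed
  next
    case (Suc t)
    have "gS V E \<mu>0 S1 (j + Suc t) x = (\<Sum>w\<in>V. gS V E \<mu>0 S1 (j+t) w * trans_prob V E w x)"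
      by (simp add: S1_def)
    also have "\<dots> = (\<Sum>w\<in>V. c * (step_dist V E t v w * trans_prob V E w x))"
      using Suc.IH by (simp add: mult.assoc)
    also have "\<dots> = c * step_dist V E (Suc t) v x" by (simp add: sum_distrib_left)
    finally show ?case .
  qed
  have vV: "v \<in> V"
  proof (rule ccontr)
    assume nv: "v \<notin> V"
    have emp: "{xs \<in> paths V ?k. xs ! j = v} = {}"
    proof -
      have "xs ! j \<noteq> v" if "xs \<in> paths V ?k" for xs
      proof -
        have "j < length xs" "set xs \<subseteq> V" using that by (auto simp: paths_def)
        then have "xs ! j \<in> V" by (meson nth_mem subsetD)
        then show ?thesis using nv by blast
      qed
      then show ?thesis by blast
    qed
    have "walk_Pr V E \<mu>0 ?k (\<lambda>xs. xs ! j = v) = 0" unfolding walk_Pr_def emp by simp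
    then show False using assms(8) by simp
  qed
  have den: "walk_Pr V E \<mu>0 ?k (\<lambda>xs. xs ! j = v) = c"
  proof -
    have "{xs \<in> paths V ?k. xs ! j = v} = {xs \<in> paths V ?k. \<forall>i\<le>?k. xs ! i \<in> S1 i}"
      by (auto simp: S1_def)
    then have "walk_Pr V E \<mu>0 ?k (\<lambda>xs. xs ! j = v) = walk_Pr V E \<mu>0 ?k (\<lambda>xs. \<forall>i\<le>?k. xs ! i \<in> S1 i)"
      by (simp add: walk_Pr_def)
    also have "\<dots> = (\<Sum>x\<in>V. gS V E \<mu>0 S1 (j + Suc z) x)" using walk_Pr_gS[OF finV] by simp
    also have "\<dots> = c * (\<Sum>x\<in>V. step_dist V E (Suc z) v x)" by (simp only: g1 sum_distrib_left)
    also have "\<dots> = c" using step_sum[OF vV, of "Suc z"] by (simp del: step_dist.simps)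
    finally show ?thesis .
  qed
  have num: "walk_Pr V E \<mu>0 ?k (\<lambda>xs. xs ! j = v \<and> xs ! (j+z) = p \<and> xs ! Suc (j+z) = q)
      = c * step_dist V E z v p * trans_prob V E p q" if pq: "p \<in> V" "q \<in> V" for p q
  proof -
    define S2 where "S2 = (\<lambda>i::nat. {x. (i = j \<longrightarrow> x = v) \<and> (i = j + z \<longrightarrow> x = p) \<and> (i = Suc (j+z) \<longrightarrow> x = q)})"
    have "{xs \<in> paths V ?k. xs ! j = v \<and> xs ! (j+z) = p \<and> xs ! Suc (j+z) = q}
        = {xs \<in> paths V ?k. \<forall>i\<le>?k. xs ! i \<in> S2 i}"
    proof (rule Collect_cong)
      fix xs
      have "(\<forall>i\<le>?k. xs ! i \<in> S2 i) \<longleftrightarrow> xs ! j = v \<and> xs ! (j+z) = p \<and> xs ! Suc (j+z) = q"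
      proof
        assume h: "\<forall>i\<le>?k. xs ! i \<in> S2 i"
        have "xs ! j \<in> S2 j" "xs ! (j+z) \<in> S2 (j+z)" "xs ! ?k \<in> S2 ?k" using h by auto
        then show "xs ! j = v \<and> xs ! (j+z) = p \<and> xs ! Suc (j+z) = q" by (auto simp: S2_def)
      qed (auto simp: S2_def)
      then show "(xs \<in> paths V ?k \<and> xs ! j = v \<and> xs ! (j+z) = p \<and> xs ! Suc (j+z) = q) = (xs \<in> paths V ?k \<and> (\<forall>i\<le>?k. xs ! i \<in> S2 i))" by blast
    qed
    then have "walk_Pr V E \<mu>0 ?k (\<lambda>xs. xs ! j = v \<and> xs ! (j+z) = p \<and> xs ! Suc (j+z) = q)
        = walk_Pr V E \<mu>0 ?k (\<lambda>xs. \<forall>i\<le>?k. xs ! i \<in> S2 i)"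
      by (simp add: walk_Pr_def)
    also have "\<dots> = (\<Sum>x\<in>V. gS V E \<mu>0 S2 ?k x)" using walk_Pr_gS[OF finV] by simp
    also have "\<dots> = (\<Sum>x\<in>V. if x = q then c * step_dist V E z v p * trans_prob V E p q else 0)"
    proof (rule sum.cong[OF refl])
      fix x assume x: "x \<in> V"
      have r: "gS V E \<mu>0 S2 (j+z) w = (if w \<in> {p} then gS V E \<mu>0 S1 (j+z) w else 0)" for w
        by (rule gS_restrict) (auto simp: S1_def S2_def)
      have "(\<Sum>w\<in>V. gS V E \<mu>0 S2 (j+z) w * trans_prob V E w x)
          = (\<Sum>w\<in>V. if w = p then c * step_dist V E z v p * trans_prob V E p x else 0)"
        by (intro sum.cong refl) (simp add: r g1)
      also have "\<dots> = c * step_dist V E z v p * trans_prob V E p x" using pq finV by simp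
      finally have "(\<Sum>w\<in>V. gS V E \<mu>0 S2 (j+z) w * trans_prob V E w x) = c * step_dist V E z v p * trans_prob V E p x" .
      moreover have "x \<in> S2 ?k \<longleftrightarrow> x = q" by (simp add: S2_def)
      ultimately show "gS V E \<mu>0 S2 ?k x = (if x = q then c * step_dist V E z v p * trans_prob V E p q else 0)"
        by (cases "x = q") (simp_all del: gS.simps add: gS.simps(2))
    qed
    also have "\<dots> = c * step_dist V E z v p * trans_prob V E p q" using pq finV by simp
    finally show ?thesis .
  qed
  have evt: "{xs \<in> paths V ?k. xs ! j = v \<and> {xs ! (j + z), xs ! Suc (j + z)} = e}
      = {xs \<in> paths V ?k. xs ! j = v \<and> xs ! (j+z) = a \<and> xs ! Suc (j+z) = b}
        \<union> {xs \<in> paths V ?k. xs ! j = v \<and> xs ! (j+z) = b \<and> xs ! Suc (j+z) = a}"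
    using e(1) by (auto simp: doubleton_eq_iff)
  have NUM: "walk_Pr V E \<mu>0 ?k (\<lambda>xs. xs ! j = v \<and> {xs ! (j + z), xs ! Suc (j + z)} = e)
      = c * step_dist V E z v a * trans_prob V E a b + c * step_dist V E z v b * trans_prob V E b a"
  proof -
    have fin: "finite (paths V ?k)" by (rule finite_paths[OF finV])
    have "walk_Pr V E \<mu>0 ?k (\<lambda>xs. xs ! j = v \<and> {xs ! (j + z), xs ! Suc (j + z)} = e)
      = walk_Pr V E \<mu>0 ?k (\<lambda>xs. xs ! j = v \<and> xs ! (j+z) = a \<and> xs ! Suc (j+z) = b)
       + walk_Pr V E \<mu>0 ?k (\<lambda>xs. xs ! j = v \<and> xs ! (j+z) = b \<and> xs ! Suc (j+z) = a)"
      unfolding walk_Pr_def evt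
      by (rule sum.union_disjoint) (use fin ab in auto)
    then show ?thesis using num[OF e(3,4)] num[OF e(4,3)] by simp
  qed
  have cpos: "c > 0" using den assms(8) by simp
  have ratio: "walk_Pr V E \<mu>0 ?k (\<lambda>xs. xs ! j = v \<and> {xs ! (j + z), xs ! Suc (j + z)} = e)
             / walk_Pr V E \<mu>0 ?k (\<lambda>xs. xs ! j = v)
      = step_dist V E z v a / real (degree V E a) + step_dist V E z v b / real (degree V E b)"
    unfolding NUM den using cpos e(2) sym[OF e(2)]
    by (simp add: trans_prob_def field_simps)
  have mix: "is_mixed V E \<delta> z"
  proof -
    have "is_mixed V E \<delta> (mixing_time V E \<delta>)" unfolding mixing_time_def using assms(4) by (rule LeastI_ex)
    then show ?thesis using mixed_mono assms(6) by blast
  qed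
  let ?m = "real (card (edges V E))"
  let ?D = "real (min_degree V E)"
  have bound: "\<bar>step_dist V E z v p / real (degree V E p) - 1 / (2 * ?m)\<bar> \<le> \<delta> / ?D" if p: "p \<in> V" for p
  proof -
    have dp: "real (degree V E p) > 0" using deg_pos[OF p] by simp
    have Dp: "?D > 0" "?D \<le> real (degree V E p)" using min_deg[OF] min_deg(2)[OF p] by auto
    have h: "\<bar>stationary V E p - step_dist V E z v p\<bar> \<le> \<delta>" using mix p vV by (simp add: is_mixed_def)
    have "step_dist V E z v p / real (degree V E p) - 1 / (2 * ?m)
        = (step_dist V E z v p - stationary V E p) / real (degree V E p)"
      using dp by (simp add: stationary_def field_simps)
    then have "\<bar>step_dist V E z v p / real (degree V E p) - 1 / (2 * ?m)\<bar>
        = \<bar>stationary V E p - step_dist V E z v p\<bar> / real (degree V E p)"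
      by (simp add: abs_minus_commute)
    also have "\<dots> \<le> \<delta> / real (degree V E p)" using h dp by (simp add: divide_right_mono)
    also have "\<dots> \<le> \<delta> / ?D" using Dp assms(3) by (simp add: frac_le)
    finally show ?thesis .
  qed
  have b1: "\<bar>step_dist V E z v a / real (degree V E a) - 1 / (2 * ?m)\<bar> \<le> \<delta> / ?D" using bound e(3) .
  have b2: "\<bar>step_dist V E z v b / real (degree V E b) - 1 / (2 * ?m)\<bar> \<le> \<delta> / ?D" using bound e(4) .
  have half: "1 / ?m = 1 / (2 * ?m) + 1 / (2 * ?m)" by simp
  have tw: "2 * \<delta> / ?D = \<delta> / ?D + \<delta> / ?D" by simp
  show ?thesis unfolding ratio using b1 b2 half tw by (simp only:) linarith
qed

end
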